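(* For any history $\mathcal{F}_{t-1}$, conditioned on the event $E^{\widetilde f}(t)$, for all $\mathbf{x}\in\mathcal{X}$, \[ \mathbb{P}\big(\widetilde f_t(\mathbf{x})+\epsilon_{m,t}>f(\mathbf{x})\mid\mathcal{F}_{t-1}\big)\ge p,\qquad p=\frac{1}{4e\sqrt\pi}. \]
   Context: $\mathcal{X}$ finite subset of the unit ball of $\mathbb{R}^d$; $f\sim\mathcal{GP}(0,k)$, $k$ the exact NTK with $k\le K_0$, $|f|\le B'$; noise $\mathcal{N}(0,\sigma^2)$; $\delta\in(0,1)$, horizon $T$. $\widetilde k$ is the empirical NTK (gradient inner product of a network with $L+1$ layers at initialization), with $|\widetilde k-k|\le(L+1)\varepsilon$ on $\mathcal{X}\times\mathcal{X}$, $(L+1)\varepsilon\le1$, $\sigma^2\le1$, $\hat K_0=\max\{1,K_0\}$. $\beta_t=2\log(2\pi^2t^2|\mathcal{X}|/(3\delta))$. Queries indexed sequentially; $\mathrm{fb}[t]$ is the largest index observed when $\mathbf{x}_t$ is chosen ($t-\mathrm{fb}[t]\le B$); $\mathcal{F}_{t-1}$ is the history of observed inputs/outputs and pending inputs. $\widetilde\mu_{\mathrm{fb}[t]},\widetilde\sigma^2_{\mathrm{fb}[t]}$: GP posterior mean/covariance with kernel $\widetilde k$ given observations $1,\dots,\mathrm{fb}[t]$; given $\mathcal{F}_{t-1}$, $\widetilde f_t\sim\mathcal{GP}(\widetilde\mu_{\mathrm{fb}[t]},\beta_t^2\widetilde\sigma^2_{\mathrm{fb}[t]})$. $\epsilon_{m,t}=2\hat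 K_0\frac{t^2(L+1)\varepsilon}{\sigma^4}(B'+\sigma\sqrt{2\log(4T/\delta)})+\beta_t\sqrt{(L+1)\varepsilon(1+4\hat K_0^2t^2/\sigma^4)}$. $E^{\widetilde f}(t)$ is the event $|\widetilde\mu_{\mathrm{fb}[t]}(\mathbf{x})-f(\mathbf{x})|\le\beta_t\widetilde\sigma_{\mathrm{fb}[t]}(\mathbf{x})+\epsilon_{m,t}$ for all $\mathbf{x}$. *)

theory Defs
  imports "HOL-Probability.Probability"
begin

definition beta_t :: "nat \<Rightarrow> nat \<Rightarrow> real \<Rightarrow> real" where
  "beta_t t cardX \<delta> = 2 * ln (2 * pi^2 * real t^2 * real cardX / (3 * \<delta>))"

text \<open>Approximation slack epsilon_{m,t}; Lp1eps stands for (L+1)*epsilon,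
  K0hat = max 1 K0, Bp = B', sig = sigma.\<close>
definition eps_mt :: "nat \<Rightarrow> nat \<Rightarrow> nat \<Rightarrow> real \<Rightarrow> real \<Rightarrow> real \<Rightarrow> real \<Rightarrow> real \<Rightarrow> real" where
  "eps_mt t T cardX \<delta> Lp1eps K0hat Bp sig =
     2 * K0hat * (real t^2 * Lp1eps / sig^4) * (Bp + sig * sqrt (2 * ln (4 * real T / \<delta>)))
     + beta_t t cardX \<delta> * sqrt (Lp1eps * (1 + 4 * K0hat^2 * real t^2 / sig^4))"

end

theory Submission imports Defs begin

lemma tail_aux:
  fixes M :: "'w measure" and Y :: "'w \<Rightarrow> real"
  assumes M: "prob_space M" and D: "distributed M lborel Y (normal_density m s)"
    and s: "0 < s" and c: "c \<le> m + s"
  shows "measure M {w \<in> space M. Y w > c} \<ge> exp (-9/8) / (2 * sqrt (2*pi))"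
proof -
  interpret prob_space M by (rule M)
  have Ym[measurable]: "Y \<in> borel_measurable M" using D by (auto simp: distributed_def)
  define A :: "real set" where "A = {m + s <.. m + 3 / 2 * s}"
  define k where "k = exp (-9/8) / (sqrt (2*pi) * s)"
  have kpos: "0 \<le> k" using s by (simp add: k_def)
  have dens: "k \<le> normal_density m s x" if "x \<in> A" for x
  proof -
    have "(x-m)^2 \<le> ((3 / 2) * s)^2" using that s by (intro power_mono) (auto simp: A_def)
    hence "- ((x - m)^2) / (2 * s^2) \<ge> - (((3 / 2) * s)^2) / (2 * s^2)" using s by (simp add: divide_right_mono)
    moreover have "- (((3 / 2) * s)^2) / (2 * s^2) = -9/8" using s by (simp add: power2_eq_square field_simps)
    ultimately have "exp (-9/8) \<le> exp (- ((x - m)^2) / (2 * s^2))" by simp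
    moreover have "sqrt (2*pi* s^2) = sqrt (2*pi) * s" using s by (simp add: real_sqrt_mult)
    ultimately show ?thesis using s unfolding k_def normal_density_def
      by (simp add: divide_right_mono)
  qed
  have "emeasure M (Y -` A \<inter> space M) = (\<integral>\<^sup>+x. ennreal (normal_density m s x) * indicator A x \<partial>lborel)"
    by (rule distributed_emeasure[OF D]) (simp add: A_def)
  also have "\<dots> \<ge> (\<integral>\<^sup>+x. ennreal k * indicator A x \<partial>lborel)"
    by (intro nn_integral_mono) (auto simp: indicator_def dens)
  also have "(\<integral>\<^sup>+x. ennreal k * indicator A x \<partial>lborel) = ennreal k * ennreal (s/2)"
    using s by (simp add: nn_integral_cmult_indicator A_def)
  also have "ennreal k * ennreal (s/2) = ennreal (k * (s/2))"
    using kpos s by (intro ennreal_mult[symmetric]) auto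
  finally have "ennreal (k * (s/2)) \<le> emeasure M (Y -` A \<inter> space M)" .
  hence "k * (s/2) \<le> measure M (Y -` A \<inter> space M)"
    by (simp add: emeasure_eq_measure)
  also have "\<dots> \<le> measure M {w \<in> space M. Y w > c}"
    using c s by (intro finite_measure_mono) (auto simp: A_def)
  finally show ?thesis using s by (simp add: k_def)
qed

lemma const_aux: "1 / (4 * exp 1 * sqrt pi) \<le> exp (-9/8) / (2 * sqrt (2*pi))"
proof -
  have e1: "exp (-1/8::real) \<ge> 7/8" using exp_ge_add_one_self[of "-1/8::real"] by simp
  have s2: "sqrt 2 \<le> (7/4::real)" by (rule real_le_lsqrt) (auto simp: power2_eq_square)
  have "exp (-9/8::real) = exp (-1/8) / exp 1" by (simp add: exp_diff[symmetric])
  have "sqrt (2*pi) = sqrt 2 * sqrt pi" by (simp add: real_sqrt_mult)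
  have "1 / (4 * exp 1 * sqrt pi) = (1/4) / (exp 1 * sqrt pi)" by simp
  also have "\<dots> \<le> (exp (-1/8) / 2 / sqrt 2) / (exp 1 * sqrt pi)"
    using e1 s2 by (intro divide_right_mono) (auto simp: field_simps)
  also have "\<dots> = exp (-9/8) / (2 * sqrt (2*pi))"
    using \<open>exp (-9/8::real) = _\<close> \<open>sqrt (2*pi) = _\<close> by (simp add: field_simps)
  finally show ?thesis .
qed
theorem lemma14:
  fixes X :: "(real^'d) set"
    and f :: "real^'d \<Rightarrow> real"
    and mu_tilde sigma_tilde :: "real^'d \<Rightarrow> real"
    and M :: "'w measure"
    and f_tilde :: "real^'d \<Rightarrow> 'w \<Rightarrow> real"
    and t T L :: nat
    and \<delta> \<epsilon> \<sigma> K0 Bp :: real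
  assumes X_fin: "finite X" and X_ball: "\<forall>x\<in>X. norm x \<le> 1"
    and f_bd: "\<forall>x\<in>X. \<bar>f x\<bar> \<le> Bp"
    and delta: "0 < \<delta>" "\<delta> < 1"
    and t: "1 \<le> t" "t \<le> T"
    and sig: "0 < \<sigma>" "\<sigma>^2 \<le> 1"
    and eps: "0 \<le> \<epsilon>" "(real L + 1) * \<epsilon> \<le> 1"
    and K0: "0 < K0"
    and sigma_pos: "\<forall>x\<in>X. 0 < sigma_tilde x"
    \<comment> \<open>M is the conditional probability given the history F_{t-1}; under it,
        f_tilde_t(x) ~ N(mu_tilde_fb[t](x), beta_t^2 sigma_tilde_fb[t]^2(x))\<close>
    and M: "prob_space M"
    and post: "\<forall>x\<in>X. distributed M lborel (f_tilde x)
                 (normal_density (mu_tilde x) (beta_t t (card X) \<delta> * sigma_tilde x))"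
    \<comment> \<open>the event E^{f_tilde}(t)\<close>
    and E: "\<forall>x\<in>X. \<bar>mu_tilde x - f x\<bar> \<le> beta_t t (card X) \<delta> * sigma_tilde x
                 + eps_mt t T (card X) \<delta> ((real L + 1) * \<epsilon>) (max 1 K0) Bp \<sigma>"
  shows "\<forall>x\<in>X. measure M {w \<in> space M.
            f_tilde x w + eps_mt t T (card X) \<delta> ((real L + 1) * \<epsilon>) (max 1 K0) Bp \<sigma> > f x}
          \<ge> 1 / (4 * exp 1 * sqrt pi)"
proof
  fix x assume xX: "x \<in> X"
  define b where "b = beta_t t (card X) \<delta>"
  define e where "e = eps_mt t T (card X) \<delta> ((real L + 1) * \<epsilon>) (max 1 K0) Bp \<sigma>"
  have cX: "1 \<le> real (card X)" using X_fin xX proof -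
    have "card X \<noteq> 0" using X_fin xX by auto
    thus ?thesis by simp
  qed
  have tt: "1 \<le> real t ^ 2" using t by simp
  have "2 * pi^2 \<ge> 2 * 2^2" using pi_ge_two by (intro mult_left_mono power_mono) auto
  hence "1 < 2 * pi^2 * 1 * 1 / (3 * \<delta>)" using delta by (simp add: field_simps)
  also have "\<dots> \<le> 2 * pi^2 * real t^2 * real (card X) / (3 * \<delta>)"
    using delta tt cX by (intro divide_right_mono mult_mono) auto
  finally have "0 < b" unfolding b_def beta_t_def by simp
  hence sp: "0 < b * sigma_tilde x" using sigma_pos xX by simp
  have "f x - e \<le> mu_tilde x + b * sigma_tilde x" using E xX unfolding b_def e_def by auto
  from tail_aux[OF M post[rule_format, OF xX, folded b_def] sp this]
  have "exp (-9/8) / (2 * sqrt (2*pi)) \<le> measure M {w \<in> space M. f x - e < f_tilde x w}" .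
  moreover have "{w \<in> space M. f x - e < f_tilde x w} = {w \<in> space M. f_tilde x w + e > f x}" by auto
  ultimately show "measure M {w \<in> space M.
            f_tilde x w + eps_mt t T (card X) \<delta> ((real L + 1) * \<epsilon>) (max 1 K0) Bp \<sigma> > f x}
          \<ge> 1 / (4 * exp 1 * sqrt pi)" using const_aux unfolding e_def by simp
qed
end
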